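(* Let $K$ be a field and $K\langle x,y\rangle$ the free unitary associative algebra of rank $2$ over $K$. Let $V=\mathrm{span}([x,y]^k\mid k\ge 0)$ where $[x,y]=xy-yx$. Let $u(x,y)\in K\langle x,y\rangle\setminus V$ be written as $u=\sum\gamma_{ab}u_{ab}$, $\gamma_{ab}\in K$, in the basis of elements $$u_{ab}=x^{a_1}y^{b_1}[x,y]x^{a_2}y^{b_2}\cdots x^{a_r}y^{b_r}[x,y]x^{a_{r+1}}y^{b_{r+1}},\quad a_i,b_i,r\ge0,$$ and let $\rho=(\alpha x+p(y),\beta y+\gamma)$, with $\alpha,\beta\in K\setminus\{0\}$, $\gamma\in K$, $p(y)\in K[y]$ of degree at least $2$, be a nonaffine triangular automorphism. If $a_1=\cdots=a_{r+1}=0$ for all summands $u_{ab}$ with nonzero coefficient $\gamma_{ab}$, then $\deg u=\deg(\rho u)$. If some $a_i\neq0$ in some summand $u_{ab}$ with $\gamma_{ab}\neq0$, and $\deg p(y)=k>\deg u$, then $\deg(\overline{\rho u})\ge k$.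
   Context: The elements $u_{ab}$ above form a vector space basis of $K\langle x,y\rangle$. The automorphism $\rho=(f,g)$ means $\rho x=f$, $\rho y=g$, and $\rho u=u(f,g)$. $\deg$ denotes total degree. Since $V$ is a graded subspace, the quotient $\overline{K\langle x,y\rangle}=K\langle x,y\rangle/V$ inherits the grading; for $w\notin V$, $\overline{w}$ denotes its image and $\deg\overline{w}$ is the largest $s$ such that the degree-$s$ homogeneous component of $w$ does not lie in $V$. *)

theory Defs
  imports "HOL-Computational_Algebra.Polynomial"
begin

text \<open>Free associative unital algebra K<x,y>: elements are coefficient functions on
words over {x,y} (False = x, True = y) with finite support.\<close>

type_synonym 'k ncp = "bool list \<Rightarrow> 'k"

definition ncsupp :: "'k::zero ncp \<Rightarrow> bool list set" where
  "ncsupp u = {w. u w \<noteq> 0}"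

definition ncone :: "'k::{zero,one} ncp" where
  "ncone = (\<lambda>w. if w = [] then 1 else 0)"

definition ncx :: "'k::{zero,one} ncp" where
  "ncx = (\<lambda>w. if w = [False] then 1 else 0)"

definition ncy :: "'k::{zero,one} ncp" where
  "ncy = (\<lambda>w. if w = [True] then 1 else 0)"

definition ncadd :: "'k::plus ncp \<Rightarrow> 'k ncp \<Rightarrow> 'k ncp" where
  "ncadd p q = (\<lambda>w. p w + q w)"

definition ncsub :: "'k::minus ncp \<Rightarrow> 'k ncp \<Rightarrow> 'k ncp" where
  "ncsub p q = (\<lambda>w. p w - q w)"

definition ncsmul :: "'k::times \<Rightarrow> 'k ncp \<Rightarrow> 'k ncp" where
  "ncsmul a p = (\<lambda>w. a * p w)"

definition ncmul :: "'k::comm_semiring_0 ncp \<Rightarrow> 'k ncp \<Rightarrow> 'k ncp" where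
  "ncmul p q = (\<lambda>w. \<Sum>i\<le>length w. p (take i w) * q (drop i w))"

definition ncpow :: "'k::comm_semiring_1 ncp \<Rightarrow> nat \<Rightarrow> 'k ncp" where
  "ncpow p n = ((ncmul p) ^^ n) ncone"

definition nccomm :: "'k::comm_ring_1 ncp" where
  "nccomm = ncsub (ncmul ncx ncy) (ncmul ncy ncx)"

definition ncV :: "'k::comm_ring_1 ncp set" where
  "ncV = {v. \<exists>N a. v = (\<lambda>w. \<Sum>k<N. a k * ncpow nccomm k w)}"

definition ncdeg :: "'k::zero ncp \<Rightarrow> nat" where
  "ncdeg u = Max (length ` ncsupp u)"

definition nchomog :: "nat \<Rightarrow> 'k::zero ncp \<Rightarrow> 'k ncp" where
  "nchomog s u = (\<lambda>w. if length w = s then u w else 0)"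

text \<open>Degree of the image in K<x,y>/V.\<close>
definition degbar :: "'k::comm_ring_1 ncp \<Rightarrow> nat" where
  "degbar u = Max {s. nchomog s u \<notin> ncV}"

fun wev :: "'k::comm_semiring_1 ncp \<Rightarrow> 'k ncp \<Rightarrow> bool list \<Rightarrow> 'k ncp" where
  "wev f g [] = ncone"
| "wev f g (b # w) = ncmul (if b then g else f) (wev f g w)"

definition ncsubst :: "'k::comm_semiring_1 ncp \<Rightarrow> 'k ncp \<Rightarrow> 'k ncp \<Rightarrow> 'k ncp" where
  "ncsubst u f g = (\<lambda>w'. \<Sum>v\<in>ncsupp u. u v * wev f g v w')"

definition poly_in_y :: "'k::comm_semiring_1 poly \<Rightarrow> 'k ncp" where
  "poly_in_y p = (\<lambda>w. if w = replicate (length w) True then coeff p (length w) else 0)"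

definition tri_aut :: "'k::comm_ring_1 \<Rightarrow> 'k poly \<Rightarrow> 'k \<Rightarrow> 'k \<Rightarrow> 'k ncp \<Rightarrow> 'k ncp" where
  "tri_aut \<alpha> p \<beta> \<gamma> u =
     ncsubst u (ncadd (ncsmul \<alpha> ncx) (poly_in_y p)) (ncadd (ncsmul \<beta> ncy) (ncsmul \<gamma> ncone))"

text \<open>Basis elements u_ab, indexed by the list [(a_1,b_1),...,(a_{r+1},b_{r+1})]:
  x^{a_1} y^{b_1} [x,y] x^{a_2} y^{b_2} ... [x,y] x^{a_{r+1}} y^{b_{r+1}}.\<close>
fun ubasis :: "(nat \<times> nat) list \<Rightarrow> 'k::comm_ring_1 ncp" where
  "ubasis [] = ncone"
| "ubasis [(a, b)] = ncmul (ncpow ncx a) (ncpow ncy b)"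
| "ubasis ((a, b) # r) =
     ncmul (ncmul (ncmul (ncpow ncx a) (ncpow ncy b)) nccomm) (ubasis r)"

end

theory Submission
  imports Defs
begin

definition dl :: "bool list \<Rightarrow> 'k::{zero,one} ncp" where
  "dl v = (\<lambda>w. if w = v then 1 else 0)"

lemma ncmul_dl: "ncmul (dl v1 :: 'k::comm_semiring_1 ncp) (dl v2) = dl (v1 @ v2)"
proof (rule ext)
  fix w :: "bool list"
  have eq: "(dl v1 (take i w) * dl v2 (drop i w) :: 'k) = (if i = length v1 then (if w = v1 @ v2 then 1 else 0) else 0)"
    if "i \<in> {..length w}" for i
  proof -
    have iff: "(take i w = v1 \<and> drop i w = v2) \<longleftrightarrow> (i = length v1 \<and> w = v1 @ v2)"
    proof
      assume h: "take i w = v1 \<and> drop i w = v2"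
      then have "w = v1 @ v2" by (metis append_take_drop_id)
      moreover have "i = length v1" using h that by auto
      ultimately show "i = length v1 \<and> w = v1 @ v2" by simp
    qed auto
    show ?thesis
    proof (cases "i = length v1 \<and> w = v1 @ v2")
      case True then show ?thesis by (simp add: dl_def)
    next
      case False
      then have nc: "\<not>(take i w = v1 \<and> drop i w = v2)" using iff by blast
      show ?thesis using False nc unfolding dl_def by auto
    qed
  qed
  have "ncmul (dl v1 :: 'k ncp) (dl v2) w = (\<Sum>i\<le>length w. (if i = length v1 then (if w = v1 @ v2 then 1 else 0) else 0))"
    unfolding ncmul_def using eq by (intro sum.cong) auto
  also have "\<dots> = dl (v1 @ v2) w" unfolding dl_def by auto
  finally show "ncmul (dl v1 :: 'k ncp) (dl v2) w = dl (v1 @ v2) w" .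
qed

lemma ncmul_sum_left:
  "ncmul (\<lambda>w. \<Sum>i\<in>I. c i * f i w) (g :: 'k::comm_semiring_1 ncp) = (\<lambda>w. \<Sum>i\<in>I. c i * ncmul (f i) g w)"
proof (rule ext)
  fix w
  have "ncmul (\<lambda>w. \<Sum>i\<in>I. c i * f i w) g w = (\<Sum>j\<le>length w. \<Sum>i\<in>I. c i * (f i (take j w) * g (drop j w)))"
    unfolding ncmul_def by (simp add: sum_distrib_right mult.assoc)
  also have "\<dots> = (\<Sum>i\<in>I. \<Sum>j\<le>length w. c i * (f i (take j w) * g (drop j w)))" by (rule sum.swap)
  also have "\<dots> = (\<Sum>i\<in>I. c i * ncmul (f i) g w)" unfolding ncmul_def by (simp add: sum_distrib_left)
  finally show "ncmul (\<lambda>w. \<Sum>i\<in>I. c i * f i w) g w = (\<Sum>i\<in>I. c i * ncmul (f i) g w)" .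
qed

lemma ncmul_sum_right:
  "ncmul (g :: 'k::comm_semiring_1 ncp) (\<lambda>w. \<Sum>i\<in>I. c i * f i w) = (\<lambda>w. \<Sum>i\<in>I. c i * ncmul g (f i) w)"
proof (rule ext)
  fix w
  have "ncmul g (\<lambda>w. \<Sum>i\<in>I. c i * f i w) w = (\<Sum>j\<le>length w. \<Sum>i\<in>I. c i * (g (take j w) * f i (drop j w)))"
    unfolding ncmul_def by (simp add: sum_distrib_left mult.assoc mult.left_commute)
  also have "\<dots> = (\<Sum>i\<in>I. \<Sum>j\<le>length w. c i * (g (take j w) * f i (drop j w)))" by (rule sum.swap)
  also have "\<dots> = (\<Sum>i\<in>I. c i * ncmul g (f i) w)" unfolding ncmul_def by (simp add: sum_distrib_left)
  finally show "ncmul g (\<lambda>w. \<Sum>i\<in>I. c i * f i w) w = (\<Sum>i\<in>I. c i * ncmul g (f i) w)" .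
qed

lemma decomp:
  fixes f :: "'k::comm_semiring_1 ncp"
  assumes "finite A" "ncsupp f \<subseteq> A"
  shows "f = (\<lambda>w. \<Sum>v\<in>A. f v * dl v w)"
proof (rule ext)
  fix w
  have "(\<Sum>v\<in>A. f v * dl v w) = (\<Sum>v\<in>A. if v = w then f v else 0)"
    unfolding dl_def by (intro sum.cong) auto
  also have "\<dots> = f w" using assms unfolding ncsupp_def by auto
  finally show "f w = (\<Sum>v\<in>A. f v * dl v w)" by simp
qed

lemma ncmul_assoc:
  "ncmul (ncmul p q) r = ncmul p (ncmul q (r :: 'k::comm_semiring_1 ncp))"
proof (rule ext)
  fix w :: "bool list"
  define n where "n = length w"
  define G where "G j i = p (take j w) * q (drop j (take i w)) * r (drop i w)" for j i
  have "ncmul (ncmul p q) r w = (\<Sum>i\<le>n. \<Sum>j\<le>i. G j i)"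
    unfolding ncmul_def G_def n_def
    by (intro sum.cong refl) (simp add: sum_distrib_right min_def)
  also have "\<dots> = (\<Sum>i\<le>n. \<Sum>j\<in>{j. j \<in> {..n} \<and> j \<le> i}. G j i)"
    by (intro sum.cong refl) auto
  also have "\<dots> = (\<Sum>j\<le>n. \<Sum>i\<in>{i. i \<in> {..n} \<and> j \<le> i}. G j i)"
    by (rule sum.swap_restrict) auto
  also have "\<dots> = (\<Sum>j\<le>n. \<Sum>m\<le>n-j. G j (j + m))"
  proof (rule sum.cong[OF refl])
    fix j assume "j \<in> {..n}"
    have "{i. i \<in> {..n} \<and> j \<le> i} = (\<lambda>m. j + m) ` {..n-j}"
      using \<open>j \<in> {..n}\<close> apply (auto simp: image_iff)
      by (rule_tac x="x - j" in bexI) auto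
    then show "(\<Sum>i\<in>{i. i \<in> {..n} \<and> j \<le> i}. G j i) = (\<Sum>m\<le>n-j. G j (j + m))"
      by (simp add: sum.reindex)
  qed
  also have "\<dots> = ncmul p (ncmul q r) w"
    unfolding ncmul_def G_def n_def
    by (intro sum.cong refl) (simp add: sum_distrib_left mult.assoc drop_take add.commute)
  finally show "ncmul (ncmul p q) r w = ncmul p (ncmul q r) w" .
qed

lemma ncone_dl: "ncone = dl []" unfolding ncone_def dl_def by simp

lemma ncmul_one_left: "ncmul ncone (p :: 'k::comm_semiring_1 ncp) = p"
proof (rule ext)
  fix w
  have "ncmul ncone p w = (\<Sum>i\<le>length w. if i = 0 then p w else 0)"
    unfolding ncmul_def ncone_def by (intro sum.cong) auto
  then show "ncmul ncone p w = p w" by simp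
qed

lemma ncmul_one_right: "ncmul (p :: 'k::comm_semiring_1 ncp) ncone = p"
proof (rule ext)
  fix w
  have "ncmul p ncone w = (\<Sum>i\<le>length w. if i = length w then p w else 0)"
    unfolding ncmul_def ncone_def by (intro sum.cong) auto
  then show "ncmul p ncone w = p w" by simp
qed

lemma wev_append: "wev f g (v1 @ v2) = ncmul (wev f g v1) (wev f g (v2 :: bool list) :: 'k::comm_semiring_1 ncp)"
  by (induction v1) (simp_all add: ncmul_one_left ncmul_assoc)

lemma supp_ncmul: "ncsupp (ncmul f (g :: 'k::comm_semiring_1 ncp)) \<subseteq> (\<lambda>(a, b). a @ b) ` (ncsupp f \<times> ncsupp g)"
proof
  fix w assume "w \<in> ncsupp (ncmul f g)"
  then have "(\<Sum>i\<le>length w. f (take i w) * g (drop i w)) \<noteq> 0" by (simp add: ncsupp_def ncmul_def)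
  then obtain i where "f (take i w) * g (drop i w) \<noteq> 0" by (meson sum.not_neutral_contains_not_neutral)
  then have "(take i w, drop i w) \<in> ncsupp f \<times> ncsupp g" by (auto simp: ncsupp_def)
  then show "w \<in> (\<lambda>(a, b). a @ b) ` (ncsupp f \<times> ncsupp g)"
    by (metis (no_types, lifting) append_take_drop_id case_prod_conv image_eqI)
qed

lemma fin_ncmul: "finite (ncsupp f) \<Longrightarrow> finite (ncsupp g) \<Longrightarrow> finite (ncsupp (ncmul f (g :: 'k::comm_semiring_1 ncp)))"
  by (rule finite_subset[OF supp_ncmul]) auto

lemma nsub:
  fixes u :: "'k::comm_semiring_1 ncp"
  assumes "finite S" "ncsupp u \<subseteq> S"
  shows "ncsubst u f g = (\<lambda>w'. \<Sum>v\<in>S. u v * wev f g v w')"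
  unfolding ncsubst_def
  by (rule ext, rule sum.mono_neutral_left) (use assms in \<open>auto simp: ncsupp_def\<close>)

lemma supp_sum: "ncsupp (\<lambda>w. \<Sum>i\<in>I. c i * (h i w :: 'k::comm_semiring_1)) \<subseteq> (\<Union>i\<in>I. ncsupp (h i))"
proof
  fix w assume "w \<in> ncsupp (\<lambda>w. \<Sum>i\<in>I. c i * h i w)"
  then obtain i where "i \<in> I" "c i * h i w \<noteq> 0" unfolding ncsupp_def
    by (meson mem_Collect_eq sum.not_neutral_contains_not_neutral)
  then have "h i w \<noteq> 0" by (metis mult_zero_right)
  then show "w \<in> (\<Union>i\<in>I. ncsupp (h i))" using \<open>i \<in> I\<close> by (auto simp: ncsupp_def)
qed

lemma subst_lin:
  fixes h :: "'i \<Rightarrow> 'k::comm_semiring_1 ncp"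
  assumes "finite I" "\<And>i. i \<in> I \<Longrightarrow> finite (ncsupp (h i))"
  shows "ncsubst (\<lambda>w. \<Sum>i\<in>I. c i * h i w) f g = (\<lambda>w'. \<Sum>i\<in>I. c i * ncsubst (h i) f g w')"
proof -
  define S where "S = (\<Union>i\<in>I. ncsupp (h i))"
  have fS: "finite S" using assms by (simp add: S_def)
  have "ncsubst (\<lambda>w. \<Sum>i\<in>I. c i * h i w) f g = (\<lambda>w'. \<Sum>v\<in>S. (\<Sum>i\<in>I. c i * h i v) * wev f g v w')"
    by (rule nsub[OF fS]) (use supp_sum[of c h I] in \<open>simp add: S_def\<close>)
  also have "\<dots> = (\<lambda>w'. \<Sum>i\<in>I. c i * (\<Sum>v\<in>S. h i v * wev f g v w'))"
    by (rule ext) (simp add: sum_distrib_right sum_distrib_left mult.assoc sum.swap[of _ S])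
  also have "\<dots> = (\<lambda>w'. \<Sum>i\<in>I. c i * ncsubst (h i) f g w')"
  proof (rule ext, rule sum.cong[OF refl])
    fix w' i assume "i \<in> I"
    then have "ncsubst (h i) f g = (\<lambda>w'. \<Sum>v\<in>S. h i v * wev f g v w')"
      using fS by (intro nsub) (auto simp: S_def)
    then show "c i * (\<Sum>v\<in>S. h i v * wev f g v w') = c i * ncsubst (h i) f g w'" by simp
  qed
  finally show ?thesis .
qed

lemma supp_dl: "ncsupp (dl v :: 'k::zero_neq_one ncp) = {v}"
  by (auto simp: ncsupp_def dl_def)

lemma subst_dl: "ncsubst (dl v :: 'k::{comm_semiring_1,zero_neq_one} ncp) f g = wev f g v"
  unfolding ncsubst_def supp_dl by (simp add: dl_def)

lemma subst_mul:
  fixes a b :: "'k::{comm_semiring_1,zero_neq_one} ncp"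
  assumes fa: "finite (ncsupp a)" and fb: "finite (ncsupp b)"
  shows "ncsubst (ncmul a b) f g = ncmul (ncsubst a f g) (ncsubst b f g)"
proof -
  define A where "A = ncsupp a"
  define B where "B = ncsupp b"
  have da: "a = (\<lambda>w. \<Sum>v\<in>A. a v * dl v w)" using fa by (intro decomp) (auto simp: A_def)
  have db: "b = (\<lambda>w. \<Sum>v\<in>B. b v * dl v w)" using fb by (intro decomp) (auto simp: B_def)
  have "ncmul a b = ncmul (\<lambda>w. \<Sum>v\<in>A. a v * dl v w) (\<lambda>w. \<Sum>v\<in>B. b v * dl v w)"
    using da db by simp
  also have "\<dots> = (\<lambda>w. \<Sum>v1\<in>A. a v1 * (\<Sum>v2\<in>B. b v2 * dl (v1 @ v2) w))"
    by (simp add: ncmul_sum_left ncmul_sum_right ncmul_dl)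
  also have "\<dots> = (\<lambda>w. \<Sum>pr\<in>A \<times> B. (a (fst pr) * b (snd pr)) * dl (fst pr @ snd pr) w)"
    by (rule ext) (simp add: sum_distrib_left sum.cartesian_product mult.assoc case_prod_beta)
  finally have eq: "ncmul a b = \<dots>" .
  have "ncsubst (ncmul a b) f g = (\<lambda>w. \<Sum>pr\<in>A \<times> B. (a (fst pr) * b (snd pr)) * ncsubst (dl (fst pr @ snd pr)) f g w)"
    unfolding eq using fa fb by (intro subst_lin) (auto simp: A_def B_def supp_dl)
  also have "\<dots> = (\<lambda>w. \<Sum>pr\<in>A \<times> B. (a (fst pr) * b (snd pr)) * ncmul (wev f g (fst pr)) (wev f g (snd pr)) w)"
    by (simp add: subst_dl wev_append)
  also have "\<dots> = (\<lambda>w. \<Sum>v1\<in>A. a v1 * (\<Sum>v2\<in>B. b v2 * ncmul (wev f g v1) (wev f g v2) w))"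
    by (rule ext) (simp add: sum_distrib_left sum.cartesian_product mult.assoc case_prod_beta)
  also have "\<dots> = ncmul (\<lambda>w. \<Sum>v\<in>A. a v * wev f g v w) (\<lambda>w. \<Sum>v\<in>B. b v * wev f g v w)"
    by (simp add: ncmul_sum_left ncmul_sum_right)
  also have "\<dots> = ncmul (ncsubst a f g) (ncsubst b f g)"
    using fa fb by (simp add: nsub[of A a] nsub[of B b] A_def B_def)
  finally show ?thesis .
qed

lemma fin_ncpow: "finite (ncsupp f) \<Longrightarrow> finite (ncsupp (ncpow f n :: 'k::{comm_semiring_1,zero_neq_one} ncp))"
  by (induction n) (simp_all add: ncpow_def ncone_dl supp_dl fin_ncmul)

lemma ncpow_Suc: "ncpow f (Suc n) = ncmul f (ncpow f n)"
  by (simp add: ncpow_def)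

lemma ncpow_0: "ncpow f 0 = ncone"
  by (simp add: ncpow_def)

lemma subst_one: "ncsubst (ncone :: 'k::{comm_semiring_1,zero_neq_one} ncp) f g = ncone"
  by (simp add: ncone_dl subst_dl)

lemma subst_pow:
  fixes h :: "'k::{comm_semiring_1,zero_neq_one} ncp"
  assumes "finite (ncsupp h)"
  shows "ncsubst (ncpow h n) f g = ncpow (ncsubst h f g) n"
  by (induction n) (simp_all add: ncpow_0 ncpow_Suc subst_one subst_mul assms fin_ncpow)

lemma subst_x: "ncsubst (ncx :: 'k::{comm_semiring_1,zero_neq_one} ncp) f g = f"
proof -
  have "ncx = (dl [False] :: 'k ncp)" by (simp add: ncx_def dl_def)
  then have "ncsubst (ncx :: 'k ncp) f g = ncsubst (dl [False] :: 'k ncp) f g" by simp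
  also have "\<dots> = f" unfolding subst_dl by (simp add: ncmul_one_right)
  finally show ?thesis .
qed

lemma subst_y: "ncsubst (ncy :: 'k::{comm_semiring_1,zero_neq_one} ncp) f g = g"
proof -
  have "ncy = (dl [True] :: 'k ncp)" by (simp add: ncy_def dl_def)
  then have "ncsubst (ncy :: 'k ncp) f g = ncsubst (dl [True] :: 'k ncp) f g" by simp
  also have "\<dots> = g" unfolding subst_dl by (simp add: ncmul_one_right)
  finally show ?thesis .
qed

lemma subst_sub:
  fixes a b :: "'k::comm_ring_1 ncp"
  assumes "finite (ncsupp a)" "finite (ncsupp b)"
  shows "ncsubst (ncsub a b) f g = ncsub (ncsubst a f g) (ncsubst b f g)"
proof -
  have e: "ncsub a b = (\<lambda>w. \<Sum>i\<in>{0::nat,1}. (if i = 0 then 1 else -1) * (if i = 0 then a else b) w)"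
    by (auto simp: ncsub_def)
  show ?thesis unfolding e using assms
    by (subst subst_lin) (auto simp: ncsub_def)
qed

fun bin :: "bool list \<Rightarrow> nat" where
  "bin [] = 0"
| "bin (b # w) = (if b then 2 ^ length w else 0) + bin w"

definition code :: "bool list \<Rightarrow> nat" where
  "code w = 2 ^ length w + bin w"

lemma bin_lt: "bin w < 2 ^ length w"
  by (induction w) auto

lemma bin_append: "bin (v @ w) = bin v * 2 ^ length w + bin w"
  by (induction v) (auto simp: power_add algebra_simps)

lemma code_append: "code (v @ w) = code v * 2 ^ length w + bin w"
  unfolding code_def by (simp add: bin_append power_add algebra_simps)

lemma code_ge: "2 ^ length w \<le> code w" by (simp add: code_def)
lemma code_lt: "code w < 2 ^ Suc (length w)" using bin_lt[of w] by (simp add: code_def)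

lemma code_len_lt: "length v < length w \<Longrightarrow> code v < code w"
proof -
  assume "length v < length w"
  then have "(2::nat) ^ Suc (length v) \<le> 2 ^ length w" by (intro power_increasing) auto
  then show ?thesis using code_lt[of v] code_ge[of w] by linarith
qed

lemma code_le_len: "code v \<le> code w \<Longrightarrow> length v \<le> length w"
  using code_len_lt[of w v] by linarith

lemma bin_inj: "length v = length w \<Longrightarrow> bin v = bin w \<Longrightarrow> v = w"
proof (induction v arbitrary: w)
  case Nil then show ?case by simp
next
  case (Cons a v)
  then obtain b w' where w: "w = b # w'" and l: "length v = length w'" by (cases w) auto
  have h: "(if a then 2 ^ length v else 0) + bin v = (if b then 2 ^ length v else 0) + bin w'"
    using Cons.prems w l by simp
  have "a = b"
    using h bin_lt[of v] bin_lt[of w'] l by (cases a; cases b) auto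
  then have "bin v = bin w'" using h by simp
  then show ?case using Cons.IH l w \<open>a = b\<close> by simp
qed

lemma code_inj: "code v = code w \<Longrightarrow> v = w"
proof -
  assume e: "code v = code w"
  then have "length v = length w" using code_le_len[of v w] code_le_len[of w v] by simp
  then show ?thesis using e bin_inj by (simp add: code_def)
qed

lemma inj_code: "inj code" by (auto intro: injI code_inj)

lemma code_app_mono:
  assumes h1: "code v1 \<le> code L1" and h2: "code v2 \<le> code L2"
  shows "code (v1 @ v2) \<le> code (L1 @ L2) \<and> (code (v1 @ v2) = code (L1 @ L2) \<longrightarrow> v1 = L1 \<and> v2 = L2)"
proof (cases "length v1 < length L1 \<or> length v2 < length L2")
  case True
  then have "length (v1 @ v2) < length (L1 @ L2)"
    using code_le_len[OF h1] code_le_len[OF h2] by auto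
  then show ?thesis using code_len_lt by fastforce
next
  case False
  then have l1: "length v1 = length L1" and l2: "length v2 = length L2"
    using code_le_len[OF h1] code_le_len[OF h2] by auto
  define m where "m = length L2"
  have b2: "bin v2 \<le> bin L2" using h2 l2 by (simp add: code_def)
  have bl: "bin v2 < 2 ^ m" "bin L2 < 2 ^ m" using bin_lt[of v2] bin_lt[of L2] l2 by (auto simp: m_def)
  show ?thesis
  proof (cases "code v1 < code L1")
    case True
    have "code v1 * 2 ^ m + bin v2 < (code v1 + 1) * 2 ^ m" using bl by simp
    also have "\<dots> \<le> code L1 * 2 ^ m" using True by (intro mult_right_mono) auto
    finally have "code (v1 @ v2) < code (L1 @ L2)"
      using l2 by (simp add: code_append m_def)
    then show ?thesis by simp
  next
    case False
    then have "code v1 = code L1" using h1 by simp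
    then have "v1 = L1" by (rule code_inj)
    moreover have "code (v1 @ v2) = code v1 * 2 ^ m + bin v2" "code (L1 @ L2) = code L1 * 2 ^ m + bin L2"
      using l2 by (simp_all add: code_append m_def)
    ultimately have e: "code (v1 @ v2) = code v1 * 2 ^ m + bin v2" "code (L1 @ L2) = code v1 * 2 ^ m + bin L2"
      by (simp_all add: \<open>code v1 = code L1\<close>)
    have "code (v1 @ v2) = code (L1 @ L2) \<longrightarrow> v2 = L2"
      using bin_inj[of v2 L2] l2 unfolding e by simp
    then show ?thesis using b2 \<open>v1 = L1\<close> unfolding e by simp
  qed
qed

definition lead :: "'k::zero ncp \<Rightarrow> bool list \<Rightarrow> bool" where
  "lead f L \<longleftrightarrow> f L \<noteq> 0 \<and> (\<forall>w. f w \<noteq> 0 \<longrightarrow> code w \<le> code L)"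

lemma lead_fin: "lead f L \<Longrightarrow> finite (ncsupp f)"
proof -
  assume "lead f L"
  then have "ncsupp f \<subseteq> code -` {..code L}" by (auto simp: lead_def ncsupp_def)
  moreover have "finite (code -` {..code L})" by (rule finite_vimageI) (auto simp: inj_code)
  ultimately show ?thesis by (rule finite_subset)
qed

lemma lead_mul:
  fixes f g :: "'k::field ncp"
  assumes lf: "lead f L" and lg: "lead g M"
  shows "lead (ncmul f g) (L @ M)"
proof -
  have val: "f (take i (L @ M)) * g (drop i (L @ M)) = (if i = length L then f L * g M else 0)"
    if "i \<in> {..length (L @ M)}" for i
  proof (cases "i = length L")
    case True then show ?thesis by simp
  next
    case False
    show ?thesis
    proof (rule ccontr)
      assume "f (take i (L @ M)) * g (drop i (L @ M)) \<noteq> (if i = length L then f L * g M else 0)"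
      then have nz: "f (take i (L @ M)) \<noteq> 0" "g (drop i (L @ M)) \<noteq> 0" using False by auto
      then have "code (take i (L @ M)) \<le> code L" "code (drop i (L @ M)) \<le> code M"
        using lf lg by (auto simp: lead_def)
      moreover have "code (take i (L @ M) @ drop i (L @ M)) = code (L @ M)"
        by (simp only: append_take_drop_id)
      ultimately have "take i (L @ M) = L" using code_app_mono by blast
      then have "length (take i (L @ M)) = length L" by simp
      then show False using that False by simp
    qed
  qed
  have "ncmul f g (L @ M) = (\<Sum>i\<le>length (L @ M). if i = length L then f L * g M else 0)"
    unfolding ncmul_def by (rule sum.cong) (use val in auto)
  also have "\<dots> = f L * g M" by simp
  finally have v: "ncmul f g (L @ M) \<noteq> 0" using lf lg by (simp add: lead_def)
  have "code w \<le> code (L @ M)" if "ncmul f g w \<noteq> 0" for w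
  proof -
    from that obtain i where "f (take i w) * g (drop i w) \<noteq> 0"
      unfolding ncmul_def by (meson sum.not_neutral_contains_not_neutral)
    then have "code (take i w) \<le> code L" "code (drop i w) \<le> code M"
      using lf lg by (auto simp: lead_def)
    from code_app_mono[OF this] have "code (take i w @ drop i w) \<le> code (L @ M)" by blast
    then show ?thesis by (simp only: append_take_drop_id)
  qed
  with v show ?thesis by (simp add: lead_def)
qed

lemma lead_dl: "lead (dl v :: 'k::zero_neq_one ncp) v"
  by (auto simp: lead_def dl_def)

lemma lead_one: "lead (ncone :: 'k::zero_neq_one ncp) []"
  by (auto simp: lead_def ncone_def)

lemma lead_pow:
  fixes f :: "'k::field ncp"
  shows "lead f L \<Longrightarrow> lead (ncpow f n) (concat (replicate n L))"
  by (induction n) (simp_all add: ncpow_0 ncpow_Suc lead_one lead_mul)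

lemma lead_smul: "a \<noteq> 0 \<Longrightarrow> lead f L \<Longrightarrow> lead (\<lambda>w. a * f w :: 'k::field) L"
  by (auto simp: lead_def)

lemma ncdeg_lead: "lead f L \<Longrightarrow> ncdeg f = length L"
proof -
  assume l: "lead f L"
  have fin: "finite (length ` ncsupp f)" using lead_fin[OF l] by simp
  have "length L \<in> length ` ncsupp f" using l by (auto simp: lead_def ncsupp_def)
  moreover have "\<forall>x\<in>length ` ncsupp f. x \<le> length L"
    using l code_le_len by (auto simp: lead_def ncsupp_def)
  ultimately show ?thesis unfolding ncdeg_def by (intro Max_eqI[OF fin]) auto
qed

lemma survive:
  fixes f :: "'i \<Rightarrow> 'k::field ncp"
  assumes fS: "finite S" and ne: "S \<noteq> {}" and c: "\<forall>l\<in>S. c l \<noteq> 0"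
    and ld: "\<forall>l\<in>S. lead (f l) (L l)" and inj: "inj_on L S"
  shows "\<exists>l0\<in>S. lead (\<lambda>w. \<Sum>l\<in>S. c l * f l w) (L l0) \<and> (\<forall>l\<in>S. code (L l) \<le> code (L l0))"
proof -
  define m where "m = Max ((\<lambda>l. code (L l)) ` S)"
  have "m \<in> (\<lambda>l. code (L l)) ` S" unfolding m_def using fS ne by (intro Max_in) auto
  then obtain l0 where l0S: "l0 \<in> S" and ml: "m = code (L l0)" by blast
  have "\<forall>l\<in>S. code (L l) \<le> m" unfolding m_def using fS by auto
  with l0S ml have l0: "l0 \<in> S" "\<forall>l\<in>S. code (L l) \<le> code (L l0)" by auto
  have z: "c l * f l (L l0) = 0" if "l \<in> S - {l0}" for l
  proof (rule ccontr)
    assume "c l * f l (L l0) \<noteq> 0"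
    then have "f l (L l0) \<noteq> 0" by auto
    then have "code (L l0) \<le> code (L l)" using ld that by (auto simp: lead_def)
    then have "code (L l0) = code (L l)" using l0 that by (meson DiffD1 le_antisym)
    then have "L l0 = L l" by (rule code_inj)
    then show False using inj that l0(1) by (auto dest: inj_onD)
  qed
  have z2: "(\<Sum>l\<in>S - {l0}. c l * f l (L l0)) = 0" by (rule sum.neutral) (use z in blast)
  have "(\<Sum>l\<in>S. c l * f l (L l0)) = c l0 * f l0 (L l0) + (\<Sum>l\<in>S - {l0}. c l * f l (L l0))"
    using fS l0(1) by (simp add: sum.remove)
  also have "\<dots> = c l0 * f l0 (L l0)" by (simp only: z2 add_0_right)
  finally have v0: "(\<Sum>l\<in>S. c l * f l (L l0)) = c l0 * f l0 (L l0)" .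
  have "c l0 \<noteq> 0" "f l0 (L l0) \<noteq> 0" using c ld l0(1) unfolding lead_def by auto
  then have v: "(\<Sum>l\<in>S. c l * f l (L l0)) \<noteq> 0" unfolding v0 by simp
  have "code w \<le> code (L l0)" if nzs: "(\<Sum>l\<in>S. c l * f l w) \<noteq> 0" for w
  proof -
    obtain l where "l \<in> S" "c l * f l w \<noteq> 0" by (rule sum.not_neutral_contains_not_neutral[OF nzs])
    then have "f l w \<noteq> 0" by simp
    moreover have "lead (f l) (L l)" using ld \<open>l \<in> S\<close> by blast
    ultimately have "code w \<le> code (L l)" unfolding lead_def by blast
    moreover have "code (L l) \<le> code (L l0)" using l0 \<open>l \<in> S\<close> by blast
    ultimately show ?thesis by linarith
  qed
  then have "lead (\<lambda>w. \<Sum>l\<in>S. c l * f l w) (L l0)" using v unfolding lead_def by blast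
  then show ?thesis using l0 by blast
qed

lemma ncx_dl: "ncx = dl [False]" by (simp add: ncx_def dl_def)
lemma ncy_dl: "ncy = dl [True]" by (simp add: ncy_def dl_def)

lemma nccomm_eq: "(nccomm :: 'k::comm_ring_1 ncp) = (\<lambda>w. dl [False, True] w - dl [True, False] w)"
  unfolding nccomm_def ncsub_def ncx_dl ncy_dl ncmul_dl by simp

lemma lead_comm: "lead (nccomm :: 'k::comm_ring_1 ncp) [True, False]"
  unfolding nccomm_eq lead_def dl_def by (auto simp: code_def)

lemma rep_concat: "concat (replicate a (replicate k x)) = replicate (a * k) x"
  by (induction a) (simp_all add: replicate_add)

fun LWu :: "(nat \<times> nat) list \<Rightarrow> bool list" where
  "LWu [] = []"
| "LWu [(a, b)] = replicate a False @ replicate b True"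
| "LWu ((a, b) # v # va) = (replicate a False @ replicate b True) @ [True, False] @ LWu (v # va)"

fun LWr :: "nat \<Rightarrow> (nat \<times> nat) list \<Rightarrow> bool list" where
  "LWr k [] = []"
| "LWr k [(a, b)] = replicate (a * k) True @ replicate b True"
| "LWr k ((a, b) # v # va) = (replicate (a * k) True @ replicate b True) @ [True, False] @ LWr k (v # va)"

lemma lead_ubasis: "l \<noteq> [] \<Longrightarrow> lead (ubasis l :: 'k::field ncp) (LWu l)"
proof (induction l rule: ubasis.induct)
  case 1 then show ?case by simp
next
  case (2 a b)
  have "lead (ncmul (ncpow ncx a) (ncpow ncy b) :: 'k ncp) (concat (replicate a [False]) @ concat (replicate b [True]))"
    by (intro lead_mul lead_pow) (simp_all add: ncx_dl ncy_dl lead_dl)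
  then show ?case by simp
next
  case (3 a b v va)
  have "lead (ncmul (ncmul (ncmul (ncpow ncx a) (ncpow ncy b)) nccomm) (ubasis (v # va)) :: 'k ncp)
     (((concat (replicate a [False]) @ concat (replicate b [True])) @ [True, False]) @ LWu (v # va))"
    using 3 by (intro lead_mul lead_pow lead_comm) (simp_all add: ncx_dl ncy_dl lead_dl)
  then show ?case by simp
qed

lemma fin_ubasis: "finite (ncsupp (ubasis l :: 'k::field ncp))"
proof (cases "l = []")
  case True then show ?thesis by (simp add: ncone_dl supp_dl)
next
  case False then show ?thesis using lead_ubasis lead_fin by blast
qed

lemma fin_comm: "finite (ncsupp (nccomm :: 'k::field ncp))"
  using lead_comm lead_fin by blast

lemma fin_x: "finite (ncsupp (ncx :: 'k::field ncp))" by (simp add: ncx_dl supp_dl)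
lemma fin_y: "finite (ncsupp (ncy :: 'k::field ncp))" by (simp add: ncy_dl supp_dl)

lemma subst_comm: "ncsubst (nccomm :: 'k::field ncp) f g = ncsub (ncmul f g) (ncmul g f)"
  unfolding nccomm_def
  by (simp add: subst_sub subst_mul fin_ncmul fin_x fin_y subst_x subst_y)

lemma subst_ub1: "ncsubst (ubasis [(a, b)] :: 'k::field ncp) f g = ncmul (ncpow f a) (ncpow g b)"
  by (simp add: subst_mul subst_pow fin_ncpow fin_x fin_y subst_x subst_y)

lemma subst_ub2: "ncsubst (ubasis ((a, b) # v # va) :: 'k::field ncp) f g =
   ncmul (ncmul (ncmul (ncpow f a) (ncpow g b)) (ncsubst nccomm f g)) (ncsubst (ubasis (v # va)) f g)"
  by (simp add: subst_mul subst_pow fin_ncpow fin_x fin_y subst_x subst_y fin_ncmul fin_comm fin_ubasis)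

lemma lead_rho:
  fixes f g :: "'k::field ncp"
  assumes lX: "lead f (replicate k True)" and lY: "lead g [True]"
    and lC: "lead (ncsubst nccomm f g) [True, False]"
  shows "l \<noteq> [] \<Longrightarrow> lead (ncsubst (ubasis l) f g) (LWr k l)"
proof (induction l rule: ubasis.induct)
  case 1 then show ?case by simp
next
  case (2 a b)
  have "lead (ncmul (ncpow f a) (ncpow g b)) (concat (replicate a (replicate k True)) @ concat (replicate b [True]))"
    by (intro lead_mul lead_pow lX lY)
  then show ?case unfolding subst_ub1 LWr.simps by (simp add: rep_concat)
next
  case (3 a b v va)
  have "lead (ncmul (ncmul (ncmul (ncpow f a) (ncpow g b)) (ncsubst nccomm f g)) (ncsubst (ubasis (v # va)) f g))
     (((concat (replicate a (replicate k True)) @ concat (replicate b [True])) @ [True, False]) @ LWr k (v # va))"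
    using 3 by (intro lead_mul lead_pow lX lY lC) simp_all
  then show ?case unfolding subst_ub2 LWr.simps by (simp add: rep_concat)
qed

lemma ncmul_add_l: "ncmul (ncadd f g) (h :: 'k::comm_semiring_1 ncp) = ncadd (ncmul f h) (ncmul g h)"
  by (rule ext) (simp add: ncmul_def ncadd_def distrib_right sum.distrib)
lemma ncmul_add_r: "ncmul (h :: 'k::comm_semiring_1 ncp) (ncadd f g) = ncadd (ncmul h f) (ncmul h g)"
  by (rule ext) (simp add: ncmul_def ncadd_def distrib_left sum.distrib)
lemma ncmul_smul_l: "ncmul (ncsmul a f) (g :: 'k::comm_semiring_1 ncp) = ncsmul a (ncmul f g)"
  by (rule ext) (simp add: ncmul_def ncsmul_def sum_distrib_left mult.assoc)
lemma ncmul_smul_r: "ncmul f (ncsmul a g :: 'k::comm_semiring_1 ncp) = ncsmul a (ncmul f g)"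
  by (rule ext) (simp add: ncmul_def ncsmul_def sum_distrib_left mult.left_commute)

lemma poly_decomp: "poly_in_y p = (\<lambda>w. \<Sum>j\<le>degree p. coeff p j * dl (replicate j True) w)"
proof (rule ext)
  fix w :: "bool list"
  have "(\<Sum>j\<le>degree p. coeff p j * dl (replicate j True) w) =
        (\<Sum>j\<le>degree p. if length w = j then (if w = replicate (length w) True then coeff p j else 0) else 0)"
    by (rule sum.cong) (auto simp: dl_def)
  also have "\<dots> = poly_in_y p w"
    by (auto simp: poly_in_y_def coeff_eq_0)
  finally show "poly_in_y p w = (\<Sum>j\<le>degree p. coeff p j * dl (replicate j True) w)" by simp
qed

lemma P_comm: "ncmul (poly_in_y p) ncy = ncmul ncy (poly_in_y (p :: 'k::comm_semiring_1 poly))"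
  unfolding poly_decomp ncy_dl ncmul_sum_left ncmul_sum_right ncmul_dl
  by (simp add: replicate_append_same)

lemma rho_comm:
  fixes \<alpha> \<beta> \<gamma> :: "'k::field"
  shows "ncsubst nccomm (ncadd (ncsmul \<alpha> ncx) (poly_in_y p)) (ncadd (ncsmul \<beta> ncy) (ncsmul \<gamma> ncone))
     = (\<lambda>w. (\<alpha> * \<beta>) * nccomm w)"
  unfolding subst_comm ncmul_add_l ncmul_add_r ncmul_smul_l ncmul_smul_r ncmul_one_left ncmul_one_right P_comm
  by (rule ext) (simp add: ncadd_def ncsmul_def ncsub_def nccomm_def algebra_simps)

lemma lead_X:
  fixes \<alpha> :: "'k::field"
  assumes "degree p \<ge> 2"
  shows "lead (ncadd (ncsmul \<alpha> ncx) (poly_in_y p)) (replicate (degree p) True)"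
proof -
  have p0: "p \<noteq> 0" using assms by auto
  have nf: "replicate (degree p) True \<noteq> [False]" by (cases "degree p") auto
  have v: "ncadd (ncsmul \<alpha> ncx) (poly_in_y p) (replicate (degree p) True) \<noteq> 0"
    using p0 nf by (simp add: ncadd_def ncsmul_def ncx_def poly_in_y_def)
  have "code w \<le> code (replicate (degree p) True)"
    if nz: "ncadd (ncsmul \<alpha> ncx) (poly_in_y p) w \<noteq> 0" for w
  proof (cases "w = [False]")
    case True then show ?thesis using assms code_len_lt[of w "replicate (degree p) True"] by simp
  next
    case False
    then have "poly_in_y p w \<noteq> 0" using nz by (simp add: ncadd_def ncsmul_def ncx_def)
    then have w: "w = replicate (length w) True" "coeff p (length w) \<noteq> 0"
      by (auto simp: poly_in_y_def split: if_splits)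
    then have "length w \<le> degree p" by (simp add: le_degree)
    then show ?thesis
    proof (cases "length w < degree p")
      case True then show ?thesis using code_len_lt[of w "replicate (degree p) True"] by simp
    next
      case False
      then have "length w = degree p" using \<open>length w \<le> degree p\<close> by simp
      then show ?thesis using w(1) by simp
    qed
  qed
  with v show ?thesis by (simp add: lead_def)
qed

lemma lead_Y:
  fixes \<beta> :: "'k::field"
  assumes "\<beta> \<noteq> 0"
  shows "lead (ncadd (ncsmul \<beta> ncy) (ncsmul \<gamma> ncone)) [True]"
proof -
  have "code w \<le> code [True]" if nz: "ncadd (ncsmul \<beta> ncy) (ncsmul \<gamma> ncone) w \<noteq> 0" for w
  proof -
    have "w = [True] \<or> w = []" using nz by (auto simp: ncadd_def ncsmul_def ncy_def ncone_def split: if_splits)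
    then show ?thesis by (auto simp: code_def)
  qed
  then show ?thesis using assms by (simp add: lead_def ncadd_def ncsmul_def ncy_def ncone_def)
qed

lemma rep_split: "replicate a x @ (y # Y) = replicate a' x @ (y # Y') \<Longrightarrow> x \<noteq> y \<Longrightarrow> a = a' \<and> Y = Y'"
proof (induction a arbitrary: a')
  case 0 then show ?case by (cases a') auto
next
  case (Suc a) then show ?case by (cases a') auto
qed

lemma divmod_eq: "(b::nat) < k \<Longrightarrow> b' < k \<Longrightarrow> a * k + b = a' * k + b' \<Longrightarrow> a = a' \<and> b = b'"
proof -
  assume h: "b < k" "b' < k" "a * k + b = a' * k + b'"
  have e1: "a = (a * k + b) div k" using h(1) by simp
  have e2: "a' = (a' * k + b') div k" using h(2) by simp
  have "a = a'" using e1 e2 h(3) by metis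
  then show ?thesis using h by simp
qed

lemma LWu_inj: "l \<noteq> [] \<Longrightarrow> l' \<noteq> [] \<Longrightarrow> LWu l = LWu l' \<Longrightarrow> l = l'"
proof (induction l arbitrary: l' rule: LWu.induct)
  case 1 then show ?case by simp
next
  case (2 a b)
  show ?case
  proof (cases l' rule: LWu.cases)
    case 1 then show ?thesis using 2 by simp
  next
    case (2 a' b')
    then have "length (filter Not (LWu [(a,b)])) = length (filter Not (LWu l'))"
      "length (LWu [(a,b)]) = length (LWu l')" using "2.prems" by simp_all
    then show ?thesis using 2 by simp
  next
    case (3 a' b' v va)
    have e: "replicate a False @ replicate b True = replicate a' False @ replicate b' True @ True # False # LWu (v # va)"
      using "2.prems" 3 by simp
    show ?thesis
    proof (cases b)
      case 0
      then have "True \<in> set (replicate a False)" using e by (metis append.assoc in_set_conv_decomp append_Nil2 replicate_0)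
      then show ?thesis by simp
    next
      case (Suc b1)
      then have "replicate a False @ True # replicate b1 True = replicate a' False @ True # (replicate b' True @ False # LWu (v # va))"
        using e by (simp add: replicate_app_Cons_same)
      from rep_split[OF this] have "replicate b1 True = replicate b' True @ False # LWu (v # va)" by simp
      then have "False \<in> set (replicate b1 True)" by simp
      then show ?thesis by simp
    qed
  qed
next
  case (3 a b v va)
  show ?case
  proof (cases l' rule: LWu.cases)
    case 1 then show ?thesis using 3 by simp
  next
    case (2 a' b')
    have e: "replicate a' False @ replicate b' True = replicate a False @ replicate b True @ True # False # LWu (v # va)"
      using "3.prems" 2 by simp
    show ?thesis
    proof (cases b')
      case 0
      then have "True \<in> set (replicate a' False)" using e by (metis append.assoc in_set_conv_decomp append_Nil2 replicate_0)
      then show ?thesis by simp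
    next
      case (Suc b1)
      then have "replicate a' False @ True # replicate b1 True = replicate a False @ True # (replicate b True @ False # LWu (v # va))"
        using e by (simp add: replicate_app_Cons_same)
      from rep_split[OF this] have "replicate b1 True = replicate b True @ False # LWu (v # va)" by simp
      then have "False \<in> set (replicate b1 True)" by simp
      then show ?thesis by simp
    qed
  next
    case (3 a' b' v' va')
    have e: "replicate a False @ True # (replicate b True @ False # LWu (v # va)) =
             replicate a' False @ True # (replicate b' True @ False # LWu (v' # va'))"
      using "3.prems" 3 by (simp add: replicate_app_Cons_same)
    from rep_split[OF e] have aa: "a = a'" and
      e2: "replicate b True @ False # LWu (v # va) = replicate b' True @ False # LWu (v' # va')" by simp_all
    from rep_split[OF e2] have "b = b'" "LWu (v # va) = LWu (v' # va')" by simp_all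
    then have "v # va = v' # va'" using "3.IH"[of "v' # va'"] by blast
    then show ?thesis using aa \<open>b = b'\<close> 3 by simp
  qed
qed

lemma LWr_inj: "l \<noteq> [] \<Longrightarrow> l' \<noteq> [] \<Longrightarrow> \<forall>(a, b)\<in>set l. b < k \<Longrightarrow> \<forall>(a, b)\<in>set l'. b < k \<Longrightarrow>
   LWr k l = LWr k l' \<Longrightarrow> l = l'"
proof (induction k l arbitrary: l' rule: LWr.induct)
  case 1 then show ?case by simp
next
  case (2 k a b)
  show ?case
  proof (cases l' rule: LWu.cases)
    case 1 then show ?thesis using 2 by simp
  next
    case (2 a' b')
    then have "length (LWr k [(a,b)]) = length (LWr k l')" using "2.prems" by simp
    then have "a * k + b = a' * k + b'" using 2 by simp
    then show ?thesis using divmod_eq[of b k b' a a'] "2.prems" 2 by simp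
  next
    case (3 a' b' v va)
    have "False \<in> set (LWr k l')" using 3 by simp
    then have "False \<in> set (LWr k [(a, b)])" using "2.prems" by simp
    then show ?thesis by simp
  qed
next
  case (3 k a b v va)
  show ?case
  proof (cases l' rule: LWu.cases)
    case 1 then show ?thesis using 3 by simp
  next
    case (2 a' b')
    have "False \<in> set (LWr k ((a, b) # v # va))" by simp
    then have "False \<in> set (LWr k l')" using "3.prems"(5) by metis
    then show ?thesis using 2 by simp
  next
    case (3 a' b' v' va')
    have e: "replicate (Suc (a * k + b)) True @ False # LWr k (v # va) =
             replicate (Suc (a' * k + b')) True @ False # LWr k (v' # va')"
      using "3.prems" 3 by (simp add: replicate_app_Cons_same replicate_add[symmetric])
    from rep_split[OF e] have s: "a * k + b = a' * k + b'" and r: "LWr k (v # va) = LWr k (v' # va')" by simp_all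
    have "a = a' \<and> b = b'" using divmod_eq[OF _ _ s] "3.prems" 3 by simp
    moreover have "v # va = v' # va'" using "3.IH"[OF _ _ _ _ r] "3.prems" 3 by simp
    ultimately show ?thesis using 3 by simp
  qed
qed

lemma LWr_LWu: "\<forall>(a, b)\<in>set l. a = 0 \<Longrightarrow> LWr k l = LWu l"
  by (induction l rule: LWu.induct) auto

lemma b_le_LWu: "(a, b) \<in> set l \<Longrightarrow> b \<le> length (LWu l)"
  by (induction l rule: LWu.induct) auto

lemma a_le_LWr: "(a, b) \<in> set l \<Longrightarrow> a * k \<le> length (LWr k l)"
  by (induction k l rule: LWr.induct) auto

lemma cnt_le: "length (filter Not (LWr k l)) \<le> length (filter (\<lambda>x. x) (LWr k l))"
  by (induction k l rule: LWr.induct) auto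

lemma cnt_lt: "k \<ge> 1 \<Longrightarrow> (a, b) \<in> set l \<Longrightarrow> a \<noteq> 0 \<Longrightarrow>
  length (filter Not (LWr k l)) < length (filter (\<lambda>x. x) (LWr k l))"
proof (induction k l rule: LWr.induct)
  case (2 k a' b')
  then have "a' * k \<ge> 1" by simp
  then show ?case using 2 by simp
next
  case (3 k a' b' v va)
  show ?case
  proof (cases "(a, b) = (a', b')")
    case True
    then have ak: "a' * k \<ge> 1" using 3 by simp
    have "length (filter Not (LWr k ((a', b') # v # va))) = 1 + length (filter Not (LWr k (v # va)))" by simp
    moreover have "length (filter (\<lambda>x. x) (LWr k ((a', b') # v # va))) = a' * k + b' + 1 + length (filter (\<lambda>x. x) (LWr k (v # va)))" by simp
    ultimately show ?thesis using cnt_le[of k "v # va"] ak by linarith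
  next
    case False
    then have "(a, b) \<in> set (v # va)" using 3 by auto
    then show ?thesis using 3 by simp
  qed
qed simp

lemma pow_comm_bal: "ncpow (nccomm :: 'k::comm_ring_1 ncp) j w \<noteq> 0 \<Longrightarrow>
   length (filter Not w) = length (filter (\<lambda>x. x) w)"
proof (induction j arbitrary: w)
  case 0 then show ?case by (simp add: ncpow_0 ncone_def split: if_splits)
next
  case (Suc j)
  then have "ncmul nccomm (ncpow nccomm j) w \<noteq> (0::'k)" by (simp add: ncpow_Suc)
  then have "(\<Sum>i\<le>length w. nccomm (take i w) * ncpow nccomm j (drop i w)) \<noteq> (0::'k)" by (simp add: ncmul_def)
  then obtain i where "nccomm (take i w) * ncpow nccomm j (drop i w) \<noteq> (0::'k)"
    by (rule sum.not_neutral_contains_not_neutral)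
  then have c: "nccomm (take i w) \<noteq> (0::'k)" and d: "ncpow (nccomm::'k ncp) j (drop i w) \<noteq> 0" by auto
  from c have "take i w = [False, True] \<or> take i w = [True, False]"
    by (auto simp: nccomm_eq dl_def split: if_splits)
  then have "length (filter Not (take i w)) = length (filter (\<lambda>x. x) (take i w))" by auto
  moreover have "length (filter Not (drop i w)) = length (filter (\<lambda>x. x) (drop i w))" using Suc.IH d by blast
  ultimately show ?case by (metis append_take_drop_id filter_append length_append)
qed

lemma V_bal: "(v :: 'k::comm_ring_1 ncp) \<in> ncV \<Longrightarrow> v w \<noteq> 0 \<Longrightarrow> length (filter Not w) = length (filter (\<lambda>x. x) w)"
proof -
  assume "v \<in> ncV" "v w \<noteq> 0"
  then obtain N a where "v = (\<lambda>w. \<Sum>k<N. a k * ncpow nccomm k w)" by (auto simp: ncV_def)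
  then have "(\<Sum>k<N. a k * ncpow nccomm k w) \<noteq> 0" using \<open>v w \<noteq> 0\<close> by simp
  then obtain j where "a j * ncpow nccomm j w \<noteq> 0" by (rule sum.not_neutral_contains_not_neutral)
  then have "ncpow (nccomm :: 'k ncp) j w \<noteq> 0" by (metis mult_zero_right)
  then show ?thesis by (rule pow_comm_bal)
qed

lemma zero_V: "(\<lambda>w. 0) \<in> ncV"
  unfolding ncV_def by (auto intro!: exI[of _ 0])

theorem corollary2p4:
  fixes u :: "'k::field ncp"
    and c :: "(nat \<times> nat) list \<Rightarrow> 'k"
    and \<alpha> \<beta> \<gamma> :: "'k"
    and p :: "'k poly"
  assumes u_fin: "finite (ncsupp u)"
    and u_notV: "u \<notin> ncV"
    and c_fin: "finite {l. c l \<noteq> 0}"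
    and c_idx: "\<forall>l. c l \<noteq> 0 \<longrightarrow> l \<noteq> []"
    and u_expand: "u = (\<lambda>w. \<Sum>l\<in>{l. c l \<noteq> 0}. c l * ubasis l w)"
    and \<alpha>: "\<alpha> \<noteq> 0" and \<beta>: "\<beta> \<noteq> 0"
    and p_deg: "degree p \<ge> 2"
  shows "((\<forall>l. c l \<noteq> 0 \<longrightarrow> (\<forall>(a, b)\<in>set l. a = 0))
            \<longrightarrow> ncdeg u = ncdeg (tri_aut \<alpha> p \<beta> \<gamma> u))
       \<and> (((\<exists>l. c l \<noteq> 0 \<and> (\<exists>(a, b)\<in>set l. a \<noteq> 0)) \<and> degree p > ncdeg u)
            \<longrightarrow> tri_aut \<alpha> p \<beta> \<gamma> u \<notin> ncV \<and> degbar (tri_aut \<alpha> p \<beta> \<gamma> u) \<ge> degree p)"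
proof -
  define S where "S = {l. c l \<noteq> 0}"
  define X where "X = ncadd (ncsmul \<alpha> ncx) (poly_in_y p)"
  define Y where "Y = ncadd (ncsmul \<beta> ncy) (ncsmul \<gamma> (ncone :: 'k ncp))"
  define k where "k = degree p"
  have fS: "finite S" using c_fin by (simp add: S_def)
  have cS: "\<forall>l\<in>S. c l \<noteq> 0" by (simp add: S_def)
  have neS: "\<forall>l\<in>S. l \<noteq> []" using c_idx by (simp add: S_def)
  have uS: "u = (\<lambda>w. \<Sum>l\<in>S. c l * ubasis l w)" using u_expand by (simp add: S_def)
  have Sne: "S \<noteq> {}"
  proof
    assume "S = {}"
    then have "u = (\<lambda>w. 0)" using uS by simp
    moreover have "(\<lambda>w. 0 :: 'k) \<in> ncV" by (rule zero_V)
    ultimately show False using u_notV by simp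
  qed
  have rho: "tri_aut \<alpha> p \<beta> \<gamma> u = (\<lambda>w. \<Sum>l\<in>S. c l * ncsubst (ubasis l) X Y w)"
    unfolding tri_aut_def X_def[symmetric] Y_def[symmetric] uS
    using fS by (intro subst_lin) (simp_all add: fin_ubasis)
  have lX: "lead X (replicate k True)" unfolding X_def k_def using p_deg by (rule lead_X)
  have lY: "lead Y [True]" unfolding Y_def using \<beta> by (rule lead_Y)
  have lC: "lead (ncsubst nccomm X Y) [True, False]"
    unfolding X_def Y_def rho_comm using \<alpha> \<beta> lead_comm by (intro lead_smul) simp_all
  have lR: "\<forall>l\<in>S. lead (ncsubst (ubasis l) X Y) (LWr k l)"
  proof
    fix l assume "l \<in> S"
    then have "l \<noteq> []" using neS by blast
    then show "lead (ncsubst (ubasis l) X Y) (LWr k l)" by (rule lead_rho[OF lX lY lC])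
  qed
  have lU: "\<forall>l\<in>S. lead (ubasis l :: 'k ncp) (LWu l)"
  proof
    fix l assume "l \<in> S"
    then have "l \<noteq> []" using neS by blast
    then show "lead (ubasis l :: 'k ncp) (LWu l)" by (rule lead_ubasis)
  qed
  have injU: "inj_on LWu S"
  proof (rule inj_onI)
    fix x y assume "x \<in> S" "y \<in> S" "LWu x = LWu y"
    then show "x = y" by (intro LWu_inj) (use neS in auto)
  qed
  obtain l0 where l0: "l0 \<in> S" "lead (\<lambda>w. \<Sum>l\<in>S. c l * ubasis l w) (LWu l0)" "\<forall>l\<in>S. code (LWu l) \<le> code (LWu l0)"
    using survive[OF fS Sne cS lU injU] by blast
  note l0 = l0(1) l0(2)[folded uS] l0(3)
  have degu: "ncdeg u = length (LWu l0)" using l0(2) by (rule ncdeg_lead)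
  have lenU: "\<forall>l\<in>S. length (LWu l) \<le> ncdeg u"
  proof
    fix l assume "l \<in> S"
    then have "code (LWu l) \<le> code (LWu l0)" using l0(3) by blast
    then show "length (LWu l) \<le> ncdeg u" unfolding degu by (rule code_le_len)
  qed
  have part1: "(\<forall>l. c l \<noteq> 0 \<longrightarrow> (\<forall>(a, b)\<in>set l. a = 0)) \<longrightarrow> ncdeg u = ncdeg (tri_aut \<alpha> p \<beta> \<gamma> u)"
  proof
    assume a0: "\<forall>l. c l \<noteq> 0 \<longrightarrow> (\<forall>(a, b)\<in>set l. a = 0)"
    then have eqL: "\<forall>l\<in>S. LWr k l = LWu l" using LWr_LWu by (auto simp: S_def)
    have injR: "inj_on (LWr k) S"
    proof (rule inj_onI)
      fix x y assume xy: "x \<in> S" "y \<in> S" "LWr k x = LWr k y"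
      then have "LWu x = LWu y" using eqL by simp
      then show "x = y" using injU xy by (auto dest: inj_onD)
    qed
    obtain l1 where l1: "l1 \<in> S" "lead (\<lambda>w. \<Sum>l\<in>S. c l * ncsubst (ubasis l) X Y w) (LWr k l1)" "\<forall>l\<in>S. code (LWr k l) \<le> code (LWr k l1)"
      using survive[OF fS Sne cS lR injR] by blast
    note l1 = l1(1) l1(2)[folded rho] l1(3)
    have "code (LWu l1) \<le> code (LWu l0)" using l0(3) l1(1) by blast
    moreover have "code (LWr k l0) \<le> code (LWr k l1)" using l1(3) l0(1) by blast
    then have "code (LWu l0) \<le> code (LWu l1)" using eqL l0(1) l1(1) by simp
    ultimately have "LWu l1 = LWu l0" using code_inj by (meson le_antisym)
    then have "ncdeg (tri_aut \<alpha> p \<beta> \<gamma> u) = length (LWu l0)"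
      using ncdeg_lead[OF l1(2)] eqL l1(1) by simp
    then show "ncdeg u = ncdeg (tri_aut \<alpha> p \<beta> \<gamma> u)" using degu by simp
  qed
  have part2: "((\<exists>l. c l \<noteq> 0 \<and> (\<exists>(a, b)\<in>set l. a \<noteq> 0)) \<and> degree p > ncdeg u)
            \<longrightarrow> tri_aut \<alpha> p \<beta> \<gamma> u \<notin> ncV \<and> degbar (tri_aut \<alpha> p \<beta> \<gamma> u) \<ge> degree p"
  proof
    assume h: "(\<exists>l. c l \<noteq> 0 \<and> (\<exists>(a, b)\<in>set l. a \<noteq> 0)) \<and> degree p > ncdeg u"
    then obtain la a1 b1 where la: "la \<in> S" "(a1, b1) \<in> set la" "a1 \<noteq> 0" by (auto simp: S_def)
    have kd: "k > ncdeg u" using h by (simp add: k_def)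
    have k1: "k \<ge> 1" using p_deg by (simp add: k_def)
    have bk: "\<forall>l\<in>S. \<forall>(a, b)\<in>set l. b < k"
    proof (intro ballI, clarify)
      fix l a b assume "l \<in> S" "(a, b) \<in> set l"
      then have "b \<le> length (LWu l)" using b_le_LWu by blast
      moreover have "length (LWu l) \<le> ncdeg u" using lenU \<open>l \<in> S\<close> by blast
      ultimately show "b < k" using kd by linarith
    qed
    have injR: "inj_on (LWr k) S"
    proof (rule inj_onI)
      fix x y assume xy: "x \<in> S" "y \<in> S" "LWr k x = LWr k y"
      show "x = y" by (rule LWr_inj[of x y k]) (use xy neS bk in auto)
    qed
    obtain l2 where l2: "l2 \<in> S" "lead (\<lambda>w. \<Sum>l\<in>S. c l * ncsubst (ubasis l) X Y w) (LWr k l2)" "\<forall>l\<in>S. code (LWr k l) \<le> code (LWr k l2)"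
      using survive[OF fS Sne cS lR injR] by blast
    note l2 = l2(1) l2(2)[folded rho] l2(3)
    define L where "L = LWr k l2"
    have "a1 * k \<le> length (LWr k la)" using la(2) by (rule a_le_LWr)
    moreover have "length (LWr k la) \<le> length L" using l2(3) la(1) code_le_len by (auto simp: L_def)
    moreover have "k \<le> a1 * k" using la(3) by simp
    ultimately have kL: "k \<le> length L" by linarith
    have "\<exists>(a, b)\<in>set l2. a \<noteq> 0"
    proof (rule ccontr)
      assume "\<not> (\<exists>(a, b)\<in>set l2. a \<noteq> 0)"
      then have "LWr k l2 = LWu l2" using LWr_LWu by blast
      then have "length L \<le> ncdeg u" using lenU l2(1) by (simp add: L_def)
      then show False using kL kd by simp
    qed
    then obtain a2 b2 where "(a2, b2) \<in> set l2" "a2 \<noteq> 0" by auto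
    then have unb: "length (filter Not L) < length (filter (\<lambda>x. x) L)"
      using cnt_lt k1 by (simp add: L_def)
    have nzL: "tri_aut \<alpha> p \<beta> \<gamma> u L \<noteq> 0" using l2(2) by (simp add: lead_def L_def)
    have notV: "tri_aut \<alpha> p \<beta> \<gamma> u \<notin> ncV"
    proof
      assume "tri_aut \<alpha> p \<beta> \<gamma> u \<in> ncV"
      from V_bal[OF this nzL] show False using unb by simp
    qed
    define R where "R = tri_aut \<alpha> p \<beta> \<gamma> u"
    have finR: "finite (ncsupp R)" using lead_fin l2(2) by (simp add: R_def)
    have sub: "{s. nchomog s R \<notin> ncV} \<subseteq> length ` ncsupp R"
    proof
      fix s assume "s \<in> {s. nchomog s R \<notin> ncV}"
      then have "nchomog s R \<noteq> (\<lambda>w. 0)" using zero_V by auto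
      then obtain w where "nchomog s R w \<noteq> 0" by auto
      then have "length w = s" "R w \<noteq> 0" by (auto simp: nchomog_def split: if_splits)
      then show "s \<in> length ` ncsupp R" by (auto simp: ncsupp_def)
    qed
    have finH: "finite {s. nchomog s R \<notin> ncV}" using finite_subset[OF sub] finR by simp
    have nzH: "nchomog (length L) R L \<noteq> 0" using nzL by (simp add: nchomog_def R_def)
    have "nchomog (length L) R \<notin> ncV"
    proof
      assume "nchomog (length L) R \<in> ncV"
      from V_bal[OF this nzH] show False using unb by simp
    qed
    then have "length L \<le> degbar R" unfolding degbar_def using finH by (simp add: Max_ge)
    then have "degree p \<le> degbar R" using kL by (simp add: k_def)
    then show "tri_aut \<alpha> p \<beta> \<gamma> u \<notin> ncV \<and> degbar (tri_aut \<alpha> p \<beta> \<gamma> u) \<ge> degree p"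
      using notV by (simp add: R_def)
  qed
  show ?thesis using part1 part2 by blast
qed

end
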